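(* Let $q$ be an odd prime power, $n=2^v$ with $v\ge1$, and $s$ an odd integer. There exists $t\in\mathbb{Z}_{2^v}$ with $qt\equiv t\pmod{2^v}$ such that Type-I duadic splittings of $\mathbb{Z}_{2^v}$ given by $\rho_{s,t}$ exist if and only if $\nu_2(q^j-s)+\nu_2(q-1)>v$ for all integers $j\ge0$.
   Context: $\mu_q:\mathbb{Z}_n\to\mathbb{Z}_n$, $i\mapsto qi\bmod n$; $P$ is $\mu_q$-invariant if $\mu_q(P)=P$. $\rho_{s,t}:\mathbb{Z}_n\to\mathbb{Z}_n$, $i\mapsto s(i+t)\bmod n$. Type-I duadic splittings of $\mathbb{Z}_n$ given by $\rho_{s,t}$ exist if there is a $\mu_q$-invariant $P$ with $\mathbb{Z}_n=P\cup\rho_{s,t}(P)$ a disjoint union. $\nu_2$ is the $2$-adic valuation, $\nu_2(0)=\infty$. *)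

theory Defs
  imports "HOL-Computational_Algebra.Computational_Algebra" "HOL-Library.Extended_Nat"
begin

text \<open>Elements of Z_n are represented by the integers 0..n-1.\<close>

definition mu :: "int \<Rightarrow> int \<Rightarrow> int \<Rightarrow> int" where
  "mu n q i = (q * i) mod n"

definition rho :: "int \<Rightarrow> int \<Rightarrow> int \<Rightarrow> int \<Rightarrow> int" where
  "rho n s t i = (s * (i + t)) mod n"

definition typeI_duadic_exists :: "int \<Rightarrow> int \<Rightarrow> int \<Rightarrow> int \<Rightarrow> bool" where
  "typeI_duadic_exists n q s t \<longleftrightarrow>
     (\<exists>P. P \<subseteq> {0..<n} \<and> mu n q ` P = P \<and>
          P \<inter> rho n s t ` P = {} \<and> P \<union> rho n s t ` P = {0..<n})"

definition nu2 :: "int \<Rightarrow> enat" where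
  "nu2 x = (if x = 0 then \<infinity> else enat (multiplicity (2::int) x))"

end

theory Submission imports Defs "HOL-Number_Theory.Cong" begin

lemma nu2_reform:
  fixes x q :: int
  assumes "q - 1 \<noteq> 0"
  shows "nu2 x + nu2 (q-1) > enat v \<longleftrightarrow> 2^(v+1 - multiplicity 2 (q-1)) dvd x"
proof (cases "x = 0")
  case True
  then show ?thesis using assms by (simp add: nu2_def)
next
  case False
  define a where "a = multiplicity (2::int) (q-1)"
  have "nu2 x + nu2 (q-1) = enat (multiplicity 2 x + a)"
    using False assms by (simp add: nu2_def a_def)
  hence "nu2 x + nu2 (q-1) > enat v \<longleftrightarrow> v + 1 - a \<le> multiplicity 2 x" by auto
  also have "\<dots> \<longleftrightarrow> 2^(v+1-a) dvd x"
  proof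
    assume "v + 1 - a \<le> multiplicity 2 x" then show "2^(v+1-a) dvd x" by (rule multiplicity_dvd')
  next
    assume "2^(v+1-a) dvd x" then show "v + 1 - a \<le> multiplicity 2 x"
      using False by (intro multiplicity_geI) auto
  qed
  finally show ?thesis by (simp add: a_def)
qed

lemma cancel2:
  fixes u t :: int
  assumes "2^v dvd 2^a * u * t" "odd u"
  shows "2^(v-a) dvd t"
proof (cases "a \<le> v")
  case True
  have "(2::int)^v = 2^a * 2^(v-a)" using True by (simp flip: power_add)
  with assms(1) have "2^(v-a) dvd u * t" by (simp add: mult.assoc)
  moreover have "coprime ((2::int)^(v-a)) u" using assms(2) by simp
  ultimately show ?thesis using coprime_dvd_mult_right_iff by blast
next
  case False then show ?thesis by simp
qed

lemma affine_inj:
  fixes c d n :: int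
  assumes "coprime c n" "n > 0"
  shows "inj_on (\<lambda>i. (c*i + d) mod n) {0..<n}"
proof
  fix x y assume xy: "x \<in> {0..<n}" "y \<in> {0..<n}" "(c*x + d) mod n = (c*y + d) mod n"
  hence "[c*x = c*y] (mod n)" by (metis cong_add_rcancel cong_def)
  hence "[x = y] (mod n)" using assms(1) by (metis cong_mult_lcancel)
  thus "x = y" using xy by (simp add: cong_def)
qed

lemma affine_surj:
  fixes c d n :: int
  assumes "coprime c n" "n > 0"
  shows "(\<lambda>i. (c*i + d) mod n) ` {0..<n} = {0..<n}"
  by (rule endo_inj_surj) (use affine_inj[OF assms] assms(2) in auto)

lemma fixpt:
  fixes d e :: int
  assumes "\<not> 2^(k+1) dvd d" "2^k dvd e"
  shows "\<exists>x. (2::int)^v dvd d*x + e"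
proof -
  have d0: "d \<noteq> 0" using assms(1) by auto
  define r where "r = multiplicity (2::int) d"
  have nu: "\<not> is_unit (2::int)" by simp
  obtain u where u: "d = 2^r * u" "\<not> 2 dvd u" using multiplicity_decompose'[OF d0 nu] unfolding r_def by blast
  have "r \<le> k"
  proof (rule ccontr)
    assume "\<not> r \<le> k" hence "k+1 \<le> r" by simp
    hence "2^(k+1) dvd d" unfolding r_def by (rule multiplicity_dvd')
    with assms(1) show False by simp
  qed
  hence "2^r dvd e" using assms(2) by (meson dvd_trans le_imp_power_dvd)
  then obtain e' where e': "e = 2^r * e'" by blast
  have "coprime u ((2::int)^v)" using u(2) by simp
  then obtain y where y: "[u * y = 1] (mod 2^v)" by (metis cong_solve_coprime_int)
  have "[u * (- e' * y) + e' = 0] (mod 2^v)"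
  proof -
    have "[u * (- e' * y) + e' = -e' * (u*y) + e'] (mod 2^v)" by (simp add: algebra_simps)
    also have "[-e' * (u*y) + e' = -e' * 1 + e'] (mod 2^v)"
      by (intro cong_add cong_mult cong_refl y)
    finally show ?thesis by simp
  qed
  hence "2^v dvd u * (- e' * y) + e'" by (simp add: cong_0_iff)
  hence "2^v dvd 2^r * (u * (- e' * y) + e')" by simp
  thus ?thesis using u e' by (metis distrib_left mult.assoc)
qed


lemma no_fix:
  assumes PA: "P \<subseteq> A" and disj: "P \<inter> r ` P = {}" and un: "P \<union> r ` P = A"
    and ir: "inj_on r A" and ig: "inj_on g A" and gP: "g ` P = P" and gA: "g ` A \<subseteq> A"
    and comm: "\<And>y. y \<in> A \<Longrightarrow> g (r y) = r (g y)"
    and x: "x \<in> A"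
  shows "g (r x) \<noteq> x"
proof -
  have c1: "g (r y) \<noteq> y" if y: "y \<in> P" for y
  proof -
    have ry: "r y \<notin> P" "r y \<in> A" using disj un y by auto
    have "g (r y) \<notin> P"
    proof
      assume "g (r y) \<in> P"
      then obtain p where p: "p \<in> P" "g (r y) = g p" using gP by (metis imageE)
      hence "r y = p" using ig ry(2) PA by (meson inj_onD subsetD)
      with p ry show False by simp
    qed
    with y show ?thesis by auto
  qed
  show ?thesis
  proof (cases "x \<in> P")
    case True then show ?thesis using c1 by blast
  next
    case False
    then obtain z where z: "z \<in> P" "x = r z" using un x by auto
    show ?thesis
    proof
      assume h: "g (r x) = x"
      have zA: "z \<in> A" using z PA by auto
      have rzA: "r z \<in> A" using z un by auto
      have "r (g (r z)) = r z" using h z comm[OF rzA] by simp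
      moreover have "g (r z) \<in> A" using gA rzA by auto
      ultimately have "g (r z) = z" using ir zA by (meson inj_onD)
      with c1 z show False by blast
    qed
  qed
qed


theorem lemma3p6:
  fixes q s :: int and v :: nat
  assumes "\<exists>p k. prime p \<and> k \<ge> 1 \<and> q = p ^ k"
    and "odd q"
    and "v \<ge> 1"
    and "odd s"
  shows "(\<exists>t \<in> {0..<2^v}. (q * t) mod 2^v = t mod 2^v \<and> typeI_duadic_exists (2^v) q s t)
     \<longleftrightarrow> (\<forall>j::nat. nu2 (q ^ j - s) + nu2 (q - 1) > enat v)"
proof -
  obtain p k where pk: "prime p" "k \<ge> 1" "q = p ^ k" using assms(1) by blast
  have "p \<ge> 2" using pk(1) prime_ge_2_int by blast
  hence "p ^ k \<ge> p" using pk(2) by (metis dual_order.trans one_le_power order_le_less power_increasing power_one_right order.strict_implies_order one_le_numeral)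
  hence q2: "q \<ge> 2" using pk `p \<ge> 2` by linarith
  hence q1: "q - 1 \<noteq> 0" by simp
  define a where "a = multiplicity (2::int) (q - 1)"
  define n :: int where "n = 2^v"
  define m where "m = v - a"
  define M :: int where "M = 2^(m+1)"
  have nu: "\<not> is_unit (2::int)" by simp
  obtain u0 where u0: "q - 1 = 2^a * u0" "odd u0"
    using multiplicity_decompose'[OF q1 nu] unfolding a_def by blast
  have a1: "a \<ge> 1" unfolding a_def using assms(2) q1 by (intro multiplicity_geI) auto
  have mv: "m < v" using a1 assms(3) unfolding m_def by simp
  have npos: "n > 0" unfolding n_def by simp
  have Mn: "M dvd n" unfolding M_def n_def using mv by (intro le_imp_power_dvd) simp
  have RHS: "(\<forall>j::nat. nu2 (q ^ j - s) + nu2 (q - 1) > enat v) \<longleftrightarrow> (\<forall>j::nat. 2^(v+1-a) dvd q^j - s)"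
    using nu2_reform[OF q1] unfolding a_def by blast
  have cq: "coprime q n" unfolding n_def using assms(2) by simp
  have cs: "coprime s n" unfolding n_def using assms(4) by simp
  have mu_eq: "mu n q = (\<lambda>i. (q*i + 0) mod n)" by (auto simp: mu_def)
  have rho_eq: "\<And>t. rho n s t = (\<lambda>i. (s*i + s*t) mod n)" by (auto simp: rho_def algebra_simps)
  show ?thesis unfolding RHS
  proof
    assume "\<exists>t \<in> {0..<2^v}. (q * t) mod 2^v = t mod 2^v \<and> typeI_duadic_exists (2^v) q s t"
    then obtain t P where t: "t \<in> {0..<n}" "(q * t) mod n = t mod n"
      and P: "P \<subseteq> {0..<n}" "mu n q ` P = P" "P \<inter> rho n s t ` P = {}" "P \<union> rho n s t ` P = {0..<n}"
      unfolding typeI_duadic_exists_def n_def by blast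
    have nqt: "n dvd (q - 1) * t" using t(2) by (simp add: mod_eq_dvd_iff algebra_simps)
    hence "2^m dvd t" unfolding m_def n_def using u0 cancel2[of v a u0 t] by (simp add: mult.assoc)
    hence mt1: "2^m dvd s * t" and mt2: "2^m dvd q * s * t" by auto
    have injr: "inj_on (rho n s t) {0..<n}" unfolding rho_eq by (rule affine_inj[OF cs npos])
    have injg: "inj_on (mu n q) {0..<n}" unfolding mu_eq by (rule affine_inj[OF cq npos])
    have gA: "mu n q ` {0..<n} \<subseteq> {0..<n}" using npos by (auto simp: mu_def)
    have ig: "inj_on id {0..<n}" by simp
    have nf0: "id (rho n s t x) \<noteq> x" if "x \<in> {0..<n}" for x
      by (rule no_fix[OF P(1) P(3) P(4) injr ig _ _ _ that]) auto
    have comm: "mu n q (rho n s t y) = rho n s t (mu n q y)" for y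
    proof -
      have "mu n q (rho n s t y) = (q*s*y + q*s*t) mod n"
        by (simp add: mu_def rho_def mod_mult_right_eq algebra_simps)
      also have "\<dots> = (q*s*y + s*t) mod n"
      proof -
        have "n dvd s * ((q - 1) * t)" using nqt by (rule dvd_mult)
        hence "n dvd s * (q*t - t)" by (simp add: algebra_simps)
        thus ?thesis by (simp add: mod_eq_dvd_iff algebra_simps)
      qed
      also have "\<dots> = (s*(q*y + t)) mod n" by (simp add: algebra_simps)
      also have "\<dots> = rho n s t (mu n q y)"
        unfolding rho_def mu_def by (metis mod_add_left_eq mod_mult_right_eq)
      finally show ?thesis .
    qed
    have nf1: "mu n q (rho n s t x) \<noteq> x" if "x \<in> {0..<n}" for x
      by (rule no_fix[OF P(1) P(3) P(4) injr injg P(2) gA _ that]) (rule comm)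
    have d1: "2^(m+1) dvd s - 1"
    proof (rule ccontr)
      assume "\<not> 2^(m+1) dvd s - 1"
      then obtain x where x: "2^v dvd (s-1)*x + s*t" using fixpt[OF _ mt1] by blast
      define X where "X = x mod n"
      have XA: "X \<in> {0..<n}" using npos by (simp add: X_def)
      have "rho n s t X = (s*(x+t)) mod n" unfolding X_def rho_def by (metis mod_mult_right_eq mod_add_left_eq)
      also have "\<dots> = X" unfolding X_def using x by (simp add: n_def mod_eq_dvd_iff algebra_simps)
      finally show False using nf0[OF XA] by simp
    qed
    have d2: "2^(m+1) dvd q*s - 1"
    proof (rule ccontr)
      assume "\<not> 2^(m+1) dvd q*s - 1"
      then obtain x where x: "2^v dvd (q*s-1)*x + q*s*t" using fixpt[OF _ mt2] by blast
      define X where "X = x mod n"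
      have XA: "X \<in> {0..<n}" using npos by (simp add: X_def)
      have "rho n s t X = (s*(x+t)) mod n" unfolding X_def rho_def by (metis mod_mult_right_eq mod_add_left_eq)
      hence "mu n q (rho n s t X) = (q*(s*(x+t))) mod n" unfolding mu_def by (metis mod_mult_right_eq)
      also have "\<dots> = (q*s*(x+t)) mod n" by (simp add: algebra_simps)
      finally have "mu n q (rho n s t X) = (q*s*(x+t)) mod n" .
      also have "\<dots> = X" unfolding X_def using x by (simp add: n_def mod_eq_dvd_iff algebra_simps)
      finally show False using nf1[OF XA] by simp
    qed
    have "2^(m+1) dvd (q*s - 1) - q*(s - 1)" using d1 d2 by simp
    hence dq: "2^(m+1) dvd q - 1" by (simp add: algebra_simps)
    show "\<forall>j::nat. 2^(v+1-a) dvd q^j - s"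
    proof
      fix j :: nat
      have "[q = 1] (mod 2^(m+1))" using dq by (simp add: cong_iff_dvd_diff)
      hence "[q^j = 1] (mod 2^(m+1))" by (metis cong_pow power_one)
      hence "2^(m+1) dvd q^j - 1" by (simp add: cong_iff_dvd_diff)
      hence "2^(m+1) dvd (q^j - 1) - (s - 1)" using d1 by (rule dvd_diff)
      hence "2^(m+1) dvd q^j - s" by simp
      moreover have "(2::int)^(v+1-a) dvd 2^(m+1)" unfolding m_def by (intro le_imp_power_dvd) simp
      ultimately show "2^(v+1-a) dvd q^j - s" by (meson dvd_trans)
    qed
  next
    assume H: "\<forall>j::nat. 2^(v+1-a) dvd q^j - s"
    have ds: "M dvd s - 1 \<and> M dvd q - 1"
    proof (cases "a \<le> v")
      case True
      hence w: "v + 1 - a = m + 1" unfolding m_def by simp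
      have h0: "M dvd 1 - s" using H[rule_format, of 0] w unfolding M_def by simp
      have h1: "M dvd q - s" using H[rule_format, of 1] w unfolding M_def by simp
      have "M dvd (q - s) - (1 - s)" using h0 h1 by (rule dvd_diff[rotated])
      then show ?thesis using h0 by (simp add: dvd_diff_commute)
    next
      case False
      hence "m = 0" unfolding m_def by simp
      then show ?thesis unfolding M_def using assms(2,4) by simp
    qed
    define t :: int where "t = 2^m"
    define P where "P = {x \<in> {0..<n}. x mod M < 2^m}"
    have tA: "t \<in> {0..<n}" unfolding t_def n_def using mv by simp
    have "n dvd (q - 1) * t"
    proof -
      have "(q-1)*t = 2^(a+m) * u0" unfolding t_def u0 by (simp add: power_add)
      moreover have "(2::int)^v dvd 2^(a+m)" unfolding m_def by (intro le_imp_power_dvd) simp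
      ultimately show ?thesis unfolding n_def by simp
    qed
    hence tq: "(q * t) mod n = t mod n" by (simp add: mod_eq_dvd_iff algebra_simps)
    have Mm: "M = 2 * 2^m" unfolding M_def by simp
    have modM: "(y mod n) mod M = y mod M" for y using Mn by (simp add: mod_mod_cancel)
    have muM: "mu n q x mod M = x mod M" for x
    proof -
      have "mu n q x mod M = (q * x) mod M" unfolding mu_def modM ..
      also have "\<dots> = (1 * x) mod M" using ds by (intro mod_mult_cong) (auto simp: mod_eq_dvd_iff)
      finally show ?thesis by simp
    qed
    have rhoM: "rho n s t x mod M = (x mod M + 2^m) mod M" for x
    proof -
      have "rho n s t x mod M = (s * (x+t)) mod M" unfolding rho_def modM ..
      also have "\<dots> = (1 * (x+t)) mod M" using ds by (intro mod_mult_cong) (auto simp: mod_eq_dvd_iff)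
      finally show ?thesis by (simp add: t_def mod_add_left_eq)
    qed
    have flip1: "(r + 2^m) mod M \<ge> 2^m" if "0 \<le> r" "r < 2^m" for r :: int
    proof -
      have "(r + 2^m) mod M = r + 2^m" using that Mm by (intro mod_pos_pos_trivial) auto
      thus ?thesis using that by simp
    qed
    have flip2: "(r + 2^m) mod M < 2^m" if "2^m \<le> r" "r < M" for r :: int
    proof -
      have "(r + 2^m) mod M = (r - 2^m + 1 * M) mod M" using Mm by (simp add: add.commute)
      also have "\<dots> = (r - 2^m) mod M" by simp
      also have "\<dots> = r - 2^m" using that Mm by (intro mod_pos_pos_trivial) auto
      finally show ?thesis using that Mm by simp
    qed
    have Mpos: "M > 0" unfolding M_def by simp
    have PA: "P \<subseteq> {0..<n}" unfolding P_def by auto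
    have gP: "mu n q ` P \<subseteq> P" unfolding P_def using muM npos by (auto simp: mu_def)
    have g: "mu n q ` P = P"
      by (rule endo_inj_surj[OF _ gP]) (use PA affine_inj[OF cq npos, of 0] mu_eq in \<open>auto intro: finite_subset inj_on_subset\<close>)
    have disj: "P \<inter> rho n s t ` P = {}"
    proof -
      { fix x assume x: "x \<in> P" "rho n s t x \<in> P"
        have "0 \<le> x mod M" "x mod M < 2^m" using x(1) Mpos unfolding P_def by auto
        from flip1[OF this] x(2) have False unfolding P_def using rhoM[of x] by auto }
      thus ?thesis by blast
    qed
    have un: "P \<union> rho n s t ` P = {0..<n}"
    proof
      show "P \<union> rho n s t ` P \<subseteq> {0..<n}" using PA npos by (auto simp: rho_def)
    next
      show "{0..<n} \<subseteq> P \<union> rho n s t ` P"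
      proof
        fix y assume y: "y \<in> {0..<n}"
        then obtain x where x: "x \<in> {0..<n}" "y = rho n s t x"
          using affine_surj[OF cs npos, of "s*t"] rho_eq by (metis imageE)
        show "y \<in> P \<union> rho n s t ` P"
        proof (cases "x \<in> P")
          case True then show ?thesis using x by auto
        next
          case False
          hence "2^m \<le> x mod M" "x mod M < M" using x Mpos unfolding P_def by auto
          from flip2[OF this] have "y mod M < 2^m" using x rhoM by simp
          thus ?thesis using y unfolding P_def by auto
        qed
      qed
    qed
    show "\<exists>t \<in> {0..<2^v}. (q * t) mod 2^v = t mod 2^v \<and> typeI_duadic_exists (2^v) q s t"
      using tA tq PA g disj un unfolding typeI_duadic_exists_def n_def by blast
  qed
qed

end
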